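(* Let $m,n\ge0$, $0\le k\le\min(m,n)$, and let $i,j$ be integers with $0\le i\le m$, $0\le j\le n$, $k\le i+j\le m+n-k$. Put $m'=n-k+i$, $n'=m-k+j$, $k'=i+j-k$. Then $$\binom{m+n-k}{m-k,\ n-k,\ k}\,c_{m',n',k'}(i,j)=(-1)^i\binom{m+n-k}{m-i,\ n-j,\ k'}\,c_{m,n,k}(i,j).$$
   Context: Multinomial coefficients: $\binom{a+b+c}{a,\ b,\ c}=\frac{(a+b+c)!}{a!\,b!\,c!}$ for nonnegative $a,b,c$. Let $e,f,h$ be the standard basis of $\mathfrak{sl}(2,\mathbb{C})$. $V(n)$ is the irreducible representation of highest weight $n$ with fixed highest weight vector $\phi_n$; $\{f^i\phi_n\}_{0\le i\le n}$ is a basis, $f^{n+1}\phi_n=0$. $\mathfrak{sl}(2)$ acts on $V(m)\otimes V(n)$ by $X(v\otimes w)=Xv\otimes w+v\otimes Xw$. For any $m,n\ge 0$ and $0\le k\le\min(m,n)$, $\phi_{m,n,k}=\sum_{l=0}^{k}(-1)^l\binom{m-l}{k-l}\binom{n-k+l}{l} f^l\phi_m\otimes f^{k-l}\phi_n\in V(m)\otimes V(n)$ (a highest weight vector of weight $m+n-2k$). The coordinates $c_{m,n,k}(i,j)$ are defined by $f^{p-k}\phi_{m,n,k}=\sum_{i+j=p,\,0\le i\le m,\,0\le j\le n} c_{m,n,k}(i,j)\, f^i\phi_m\otimes f^j\phi_n$ for $k\le p\le m+n-k$. *)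

theory Defs
  imports Complex_Main
begin

text \<open>Coordinates model of V(m) (x) V(n): a vector is its coefficient function
  with respect to the basis f^i phi_m (x) f^j phi_n, indexed by (i,j),
  0 <= i <= m, 0 <= j <= n (coefficients outside this box are 0).\<close>

definition multinomial3 :: "nat \<Rightarrow> nat \<Rightarrow> nat \<Rightarrow> nat" where
  "multinomial3 a b c = fact (a + b + c) div (fact a * fact b * fact c)"

text \<open>Action of f on V(m) (x) V(n): f(f^i phi_m (x) f^j phi_n) =
  f^(i+1) phi_m (x) f^j phi_n + f^i phi_m (x) f^(j+1) phi_n, where f^(m+1) phi_m = 0.\<close>
definition f_act :: "nat \<Rightarrow> nat \<Rightarrow> (nat \<times> nat \<Rightarrow> complex) \<Rightarrow> (nat \<times> nat \<Rightarrow> complex)" where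
  "f_act m n v = (\<lambda>(i, j). if i \<le> m \<and> j \<le> n then
      (if 0 < i then v (i - 1, j) else 0) + (if 0 < j then v (i, j - 1) else 0) else 0)"

definition phi_mnk :: "nat \<Rightarrow> nat \<Rightarrow> nat \<Rightarrow> (nat \<times> nat \<Rightarrow> complex)" where
  "phi_mnk m n k = (\<lambda>(l, j). if l + j = k \<and> l \<le> m \<and> j \<le> n then
      (-1) ^ l * of_nat ((m - l) choose (k - l)) * of_nat ((n - k + l) choose l) else 0)"

definition c_coord :: "nat \<Rightarrow> nat \<Rightarrow> nat \<Rightarrow> nat \<Rightarrow> nat \<Rightarrow> complex" where
  "c_coord m n k i j = ((f_act m n ^^ (i + j - k)) (phi_mnk m n k)) (i, j)"

end

theory Submission
  imports Defs
begin

lemma pascal_sum: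
  fixes g :: "nat \<Rightarrow> 'a::comm_semiring_1"
  shows "(\<Sum>a\<le>Suc t. of_nat (Suc t choose a) * g a)
       = (\<Sum>a\<le>t. of_nat (t choose a) * g (Suc a)) + (\<Sum>a\<le>t. of_nat (t choose a) * g a)"
proof -
  have "(\<Sum>a\<le>Suc t. of_nat (Suc t choose a) * g a)
      = g 0 + (\<Sum>a\<le>t. of_nat (Suc t choose Suc a) * g (Suc a))"
    by (subst sum.atMost_Suc_shift) simp
  also have "\<dots> = g 0 + (\<Sum>a\<le>t. of_nat (t choose a) * g (Suc a) + of_nat (t choose Suc a) * g (Suc a))"
    by (simp add: distrib_right)
  also have "\<dots> = (\<Sum>a\<le>t. of_nat (t choose a) * g (Suc a)) + (g 0 + (\<Sum>a\<le>t. of_nat (t choose Suc a) * g (Suc a)))"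
    by (simp add: sum.distrib algebra_simps)
  also have "g 0 + (\<Sum>a\<le>t. of_nat (t choose Suc a) * g (Suc a)) = (\<Sum>a\<le>Suc t. of_nat (t choose a) * g a)"
    by (subst sum.atMost_Suc_shift) simp
  also have "\<dots> = (\<Sum>a\<le>t. of_nat (t choose a) * g a)"
    by (simp add: binomial_eq_0)
  finally show ?thesis .
qed

lemma iter:
  "i \<le> m \<Longrightarrow> j \<le> n \<Longrightarrow> (f_act m n ^^ t) v (i,j)
     = (\<Sum>a\<le>t. of_nat (t choose a) * (if a \<le> i \<and> t - a \<le> j then v (i-a, j-(t-a)) else 0))"
proof (induction t arbitrary: i j)
  case 0
  then show ?case by simp
next
  case (Suc t)
  define g where "g a = (if a \<le> i \<and> Suc t - a \<le> j then v (i-a, j-(Suc t - a)) else 0)" for a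
  have h1: "(if 0 < i then (f_act m n ^^ t) v (i-1,j) else 0) = (\<Sum>a\<le>t. of_nat (t choose a) * g (Suc a))"
  proof (cases "i = 0")
    case True then show ?thesis by (simp add: g_def)
  next
    case False
    then have "(f_act m n ^^ t) v (i-1,j) = (\<Sum>a\<le>t. of_nat (t choose a) * (if a \<le> i-1 \<and> t - a \<le> j then v (i-1-a, j-(t-a)) else 0))"
      using Suc.IH[of "i-1" j] Suc.prems by simp
    also have "\<dots> = (\<Sum>a\<le>t. of_nat (t choose a) * g (Suc a))"
      by (rule sum.cong) (use False in \<open>auto simp: g_def\<close>)
    finally show ?thesis using False by simp
  qed
  have h2: "(if 0 < j then (f_act m n ^^ t) v (i,j-1) else 0) = (\<Sum>a\<le>t. of_nat (t choose a) * g a)"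
  proof (cases "j = 0")
    case True then show ?thesis by (simp add: g_def)
  next
    case False
    then have "(f_act m n ^^ t) v (i,j-1) = (\<Sum>a\<le>t. of_nat (t choose a) * (if a \<le> i \<and> t - a \<le> j-1 then v (i-a, j-1-(t-a)) else 0))"
      using Suc.IH[of i "j-1"] Suc.prems by simp
    also have "\<dots> = (\<Sum>a\<le>t. of_nat (t choose a) * g a)"
      by (rule sum.cong) (use False in \<open>auto simp: g_def Suc_diff_le\<close>)
    finally show ?thesis using False by simp
  qed
  have "(f_act m n ^^ Suc t) v (i,j) = (if 0 < i then (f_act m n ^^ t) v (i-1,j) else 0)
          + (if 0 < j then (f_act m n ^^ t) v (i,j-1) else 0)"
    using Suc.prems by (simp add: f_act_def)
  also have "\<dots> = (\<Sum>a\<le>Suc t. of_nat (Suc t choose a) * g a)"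
    unfolding h1 h2 pascal_sum ..
  finally show ?case by (simp add: g_def)
qed

lemma c_closed:
  assumes "i \<le> m" "j \<le> n" "k \<le> i + j"
  shows "c_coord m n k i j = (\<Sum>a\<in>{a\<in>{..i+j-k}. a \<le> i \<and> i+j-k-a \<le> j}.
     of_nat ((i+j-k) choose a) * ((-1)^(i-a) * of_nat ((m-(i-a)) choose (k-(i-a)))
        * of_nat ((n-k+(i-a)) choose (i-a))))"
proof -
  have "c_coord m n k i j = (\<Sum>a\<le>i+j-k. of_nat ((i+j-k) choose a) *
      (if a \<le> i \<and> i+j-k-a \<le> j then phi_mnk m n k (i-a, j-(i+j-k-a)) else 0))"
    unfolding c_coord_def using assms(1,2) by (rule iter)
  also have "\<dots> = (\<Sum>a\<le>i+j-k. if a \<le> i \<and> i+j-k-a \<le> j then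
      of_nat ((i+j-k) choose a) * ((-1)^(i-a) * of_nat ((m-(i-a)) choose (k-(i-a)))
        * of_nat ((n-k+(i-a)) choose (i-a))) else 0)"
    by (rule sum.cong) (use assms in \<open>auto simp: phi_mnk_def\<close>)
  also have "\<dots> = (\<Sum>a\<in>{a\<in>{..i+j-k}. a \<le> i \<and> i+j-k-a \<le> j}. of_nat ((i+j-k) choose a) * ((-1)^(i-a) * of_nat ((m-(i-a)) choose (k-(i-a))) * of_nat ((n-k+(i-a)) choose (i-a))))"
    by (rule sum.inter_filter[symmetric]) simp
  finally show ?thesis .
qed


lemma multi_fact:
  "(of_nat (multinomial3 A B C) :: complex) = fact (A+B+C) / (fact A * fact B * fact C)"
proof -
  have e: "fact (A+B+C) = (((A+B+C) choose C) * ((A+B) choose A)) * (fact A * fact B * fact C :: nat)"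
  proof -
    have e1: "fact C * fact (A+B) * ((A+B+C) choose C) = fact (A+B+C)"
      using binomial_fact_lemma[of C "A+B+C"] by simp
    have e2: "fact A * fact B * ((A+B) choose A) = fact (A+B)"
      using binomial_fact_lemma[of A "A+B"] by simp
    show ?thesis unfolding e1[symmetric] e2[symmetric] by (simp add: ac_simps)
  qed
  have "multinomial3 A B C = ((A+B+C) choose C) * ((A+B) choose A)"
    unfolding multinomial3_def by (subst e) simp
  then have "(of_nat (multinomial3 A B C) :: complex) * (fact A * fact B * fact C) = fact (A+B+C)"
    by (metis e of_nat_fact of_nat_mult)
  then show ?thesis by (simp add: field_simps)
qed

lemma core:
  assumes "u \<le> X" "s \<le> X" "a \<le> Y" "w \<le> Y"
  shows "(of_nat (multinomial3 (X-u) (Y-a) (a+u)) :: complex) * of_nat ((a+u) choose a)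
           * of_nat (Y choose w) * of_nat (X choose s)
       = of_nat (multinomial3 (X-s) (Y-w) (s+w)) * of_nat ((s+w) choose s)
           * of_nat (X choose u) * of_nat (Y choose a)"
proof -
  have t1: "X - u + (Y - a) + (a + u) = X + Y" "X - s + (Y - w) + (s + w) = X + Y"
    using assms by auto
  show ?thesis
    unfolding multi_fact t1
    using assms
    by (simp add: binomial_fact field_simps)
qed

theorem proposition8p3:
  fixes m n k i j :: nat
  assumes "k \<le> min m n"
    and "i \<le> m" and "j \<le> n"
    and "k \<le> i + j" and "i + j \<le> m + n - k"
  shows "of_nat (multinomial3 (m - k) (n - k) k)
           * c_coord (n - k + i) (m - k + j) (i + j - k) i j
         = (-1) ^ i * of_nat (multinomial3 (m - i) (n - j) (i + j - k)) * c_coord m n k i j"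
proof -
  define p where "p = i + j - k"
  define A where "A = {a\<in>{..k}. a \<le> i \<and> k - a \<le> j}"
  define B where "B = {a\<in>{..p}. a \<le> i \<and> p - a \<le> j}"
  define M1 :: complex where "M1 = of_nat (multinomial3 (m - k) (n - k) k)"
  define M2 :: complex where "M2 = of_nat (multinomial3 (m - i) (n - j) p)"
  have pk: "i + j - p = k" "p \<le> i + j" using assms by (auto simp: p_def)
  have km: "k \<le> m" "k \<le> n" using assms(1) by auto
  have pr: "i \<le> n - k + i" "j \<le> m - k + j" using km by auto
  have L: "c_coord (n - k + i) (m - k + j) p i j = (\<Sum>a\<in>A.
     of_nat (k choose a) * ((-1)^(i-a) * of_nat ((n-k+i-(i-a)) choose (p-(i-a)))
        * of_nat ((m-k+j-p+(i-a)) choose (i-a))))"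
    using c_closed[of i "n-k+i" j "m-k+j" p, OF pr pk(2)] pk unfolding A_def by simp
  have R: "c_coord m n k i j = (\<Sum>b\<in>B.
     of_nat (p choose b) * ((-1)^(i-b) * of_nat ((m-(i-b)) choose (k-(i-b)))
        * of_nat ((n-k+(i-b)) choose (i-b))))"
    using c_closed[of i m j n k] assms unfolding B_def p_def by simp
  have bij: "bij_betw (\<lambda>a. i - a) A B"
    by (rule bij_betw_byWitness[where f'="\<lambda>b. i - b"])
       (use assms in \<open>auto simp: A_def B_def p_def\<close>)
  have R2: "c_coord m n k i j = (\<Sum>a\<in>A.
     of_nat (p choose (i-a)) * ((-1)^(i-(i-a)) * of_nat ((m-(i-(i-a))) choose (k-(i-(i-a))))
        * of_nat ((n-k+(i-(i-a))) choose (i-(i-a)))))"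
    unfolding R by (rule sum.reindex_bij_betw[OF bij, symmetric])
  have trm: "M1 * (of_nat (k choose a) * ((-1)^(i-a) * of_nat ((n-k+i-(i-a)) choose (p-(i-a)))
        * of_nat ((m-k+j-p+(i-a)) choose (i-a))))
      = (-1)^i * M2 * (of_nat (p choose (i-a)) * ((-1)^(i-(i-a)) * of_nat ((m-(i-(i-a))) choose (k-(i-(i-a))))
        * of_nat ((n-k+(i-(i-a))) choose (i-(i-a)))))" if "a \<in> A" for a
  proof -
    from that have a: "a \<le> k" "a \<le> i" "k - a \<le> j" by (auto simp: A_def)
    have e: "n-k+i-(i-a) = n-k+a" "p-(i-a) = j+a-k" "m-k+j-p+(i-a) = m-a"
         "i-(i-a) = a" "m - a - (k - a) = m - k" "n-k+a-a = n-k" "a + (k-a) = k"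
         "m - a - (i - a) = m - i" "n-k+a-(j+a-k) = n - j" "i - a + (j+a-k) = p"
      using a assms by (auto simp: p_def)
    have sgn: "(-1::complex)^i = (-1)^(i-a) * (-1)^a"
      using a by (simp flip: power_add)
    have c: "(of_nat (multinomial3 (m-a-(k-a)) (n-k+a-a) (a+(k-a))) :: complex) * of_nat ((a+(k-a)) choose a)
           * of_nat ((n-k+a) choose (j+a-k)) * of_nat ((m-a) choose (i-a))
       = of_nat (multinomial3 (m-a-(i-a)) (n-k+a-(j+a-k)) ((i-a)+(j+a-k))) * of_nat (((i-a)+(j+a-k)) choose (i-a))
           * of_nat ((m-a) choose (k-a)) * of_nat ((n-k+a) choose a)"
      by (rule core) (use a assms in auto)
    have "(-1::complex)^(i-a) * (-1)^a * (-1)^(i-a) = (-1)^a"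
      by (metis (no_types) mult.assoc mult.commute mult.left_neutral power_mult_distrib
          mult_minus1 neg_one_even_power even_add left_minus_one_mult_self)
    show ?thesis
      unfolding e M1_def M2_def sgn using c
      unfolding e
      by (simp add: algebra_simps)
  qed
  show ?thesis
    unfolding p_def[symmetric] M1_def[symmetric] M2_def[symmetric] L R2 sum_distrib_left
    by (rule sum.cong[OF refl trm])
qed

end
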